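(* Let $n\ge 2$ and set $k=\lfloor \log_2 n\rfloor$. Then $v(n)\le n-k$ if $n$ and $k$ have different parity, and $v(n)\le n-k+1$ otherwise.
   Context: A voter on a finite candidate set $A$ is a linear order (ranking) of $A$. A set of voters is a nonempty finite multiset of voters. A strong preference pattern on $A$ is a tournament $T$ on vertex set $A$. A set of voters $U$ generates $T$ if for every pair of distinct candidates $x,y$, the arc $(x,y)$ is in $T$ if and only if strictly more voters of $U$ rank $x$ above $y$ than rank $y$ above $x$. For a tournament $T$, $v(T)$ denotes the minimum size of a set of voters generating $T$, and $v(n)=\max\{v(T): T \text{ a tournament on } n \text{ vertices}\}$. *)

theory Defs
  imports Complex_Main "HOL-Library.Multiset"
begin

text \<open>A voter on a finite candidate set A is a linear order on A, given as a relation
  r with (x,y) \<in> r meaning "x is ranked above (or equal to) y".\<close>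
definition voter :: "'a set \<Rightarrow> 'a rel \<Rightarrow> bool" where
  "voter A r \<longleftrightarrow> linear_order_on A r"

definition tournament :: "'a set \<Rightarrow> 'a rel \<Rightarrow> bool" where
  "tournament A T \<longleftrightarrow> T \<subseteq> A \<times> A \<and> (\<forall>x\<in>A. (x, x) \<notin> T) \<and>
     (\<forall>x\<in>A. \<forall>y\<in>A. x \<noteq> y \<longrightarrow> ((x, y) \<in> T \<longleftrightarrow> (y, x) \<notin> T))"

definition n_prefer :: "'a rel multiset \<Rightarrow> 'a \<Rightarrow> 'a \<Rightarrow> nat" where
  "n_prefer U x y = size (filter_mset (\<lambda>r. (x, y) \<in> r \<and> x \<noteq> y) U)"

definition generates :: "'a set \<Rightarrow> 'a rel multiset \<Rightarrow> 'a rel \<Rightarrow> bool" where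
  "generates A U T \<longleftrightarrow> U \<noteq> {#} \<and> (\<forall>r\<in>#U. voter A r) \<and>
     (\<forall>x\<in>A. \<forall>y\<in>A. x \<noteq> y \<longrightarrow> ((x, y) \<in> T \<longleftrightarrow> n_prefer U x y > n_prefer U y x))"

definition vT :: "'a set \<Rightarrow> 'a rel \<Rightarrow> nat" where
  "vT A T = (LEAST m. \<exists>U. generates A U T \<and> size U = m)"

definition vn :: "nat \<Rightarrow> nat" where
  "vn n = Max {vT {0..<n} T | T. tournament {0..<n} T}"

end

theory Submission
  imports Defs
begin

definition rel_of :: "'a set \<Rightarrow> ('a \<Rightarrow> int) \<Rightarrow> 'a rel" where
  "rel_of B f = {(x,y). x\<in>B \<and> y\<in>B \<and> f y \<le> f x}"

definition cnt :: "('a \<Rightarrow> int) list \<Rightarrow> 'a \<Rightarrow> 'a \<Rightarrow> nat" where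
  "cnt fs x y = length (filter (\<lambda>f. f y < f x) fs)"

definition good :: "'a set \<Rightarrow> 'a rel \<Rightarrow> ('a \<Rightarrow> int) list \<Rightarrow> bool" where
  "good B T fs \<longleftrightarrow> (\<forall>f\<in>set fs. inj_on f B) \<and>
     (\<forall>x\<in>B. \<forall>y\<in>B. x\<noteq>y \<longrightarrow> ((x,y)\<in>T \<longleftrightarrow> cnt fs y x < cnt fs x y))"

lemma bound_ex: "finite S \<Longrightarrow> \<exists>M::int. M \<ge> 1 \<and> (\<forall>z\<in>S. \<bar>g z\<bar> < M)"
proof -
  assume "finite S"
  define M where "M = Max (insert 0 ((\<lambda>z. \<bar>g z\<bar>) ` S)) + 1"
  have "\<forall>z\<in>S. \<bar>g z\<bar> < M"
  proof
    fix z assume "z \<in> S"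
    hence "\<bar>g z\<bar> \<le> Max (insert 0 ((\<lambda>z. \<bar>g z\<bar>) ` S))"
      using \<open>finite S\<close> by (intro Max_ge) auto
    thus "\<bar>g z\<bar> < M" unfolding M_def by simp
  qed
  moreover have "M \<ge> 1" unfolding M_def using \<open>finite S\<close> by (simp add: Max_ge_iff)
  ultimately show ?thesis by blast
qed

lemma cnt_append[simp]: "cnt (xs @ ys) x y = cnt xs x y + cnt ys x y"
  by (simp add: cnt_def)

lemma cnt_map_all: "(\<forall>f\<in>set xs. h f y < h f x) \<Longrightarrow> cnt (map h xs) x y = length xs"
  by (simp add: cnt_def comp_def)

lemma cnt_map_none: "(\<forall>f\<in>set xs. \<not> h f y < h f x) \<Longrightarrow> cnt (map h xs) x y = 0"
  by (simp add: cnt_def comp_def)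

lemma cnt_map_same: "(\<forall>f\<in>set xs. h f x = f x \<and> h f y = f y) \<Longrightarrow> cnt (map h xs) x y = cnt xs x y"
  by (induction xs) (auto simp: cnt_def)

lemma ext2:
  assumes tour: "tournament A T" and BA: "insert u (insert w B') \<subseteq> A" and fin: "finite B'"
    and uB: "u \<notin> B'" and wB: "w \<notin> B'" and uw: "u \<noteq> w"
    and len: "length fs = 2*m+1" and gd: "good B' T fs"
  shows "\<exists>fs'. length fs' = 2*m+3 \<and> good (insert u (insert w B')) T fs'"
proof -
  obtain M where M1: "M \<ge> 1" and Mz: "\<forall>z\<in>set fs \<times> B'. \<bar>(\<lambda>(f,x). f x) z\<bar> < M"
    using bound_ex[of "set fs \<times> B'" "\<lambda>(f,x). f x"] fin by auto
  have Mb: "\<And>f x. f \<in> set fs \<Longrightarrow> x \<in> B' \<Longrightarrow> \<bar>f x\<bar> < M" using Mz by auto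
  have injs: "\<And>f. f \<in> set fs \<Longrightarrow> inj_on f B'" using gd by (auto simp: good_def)
  define g where "g = hd fs"
  have gin: "g \<in> set fs" unfolding g_def using len by (cases fs) auto
  have ginj: "inj_on g B'" using injs gin by auto
  have gb: "\<And>x. x \<in> B' \<Longrightarrow> \<bar>g x\<bar> < M" using Mb gin by auto
  define a where "a = (if (u,w)\<in>T then 2 else 1::int)"
  define c where "c = 3 - a"
  define ext where "ext s f = f(u := s + a, w := s + c)" for s :: int and f :: "'a \<Rightarrow> int"
  define top where "top = map (ext M) (take m fs)"
  define bot where "bot = map (ext (-M-3)) (drop m fs)"
  define bK where "bK x = (if (u,x)\<in>T then (if (w,x)\<in>T then 8*M else 12*M) else if (w,x)\<in>T then 4*M else 0)" for x
  define \<sigma> where "\<sigma> x = (if x = u then 20*M else if x = w then 10*M else bK x + g x)" for x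
  define \<tau> where "\<tau> x = (if x = u then -6*M else if x = w then -2*M else -(bK x + g x))" for x
  define fs' where "fs' = top @ bot @ [\<sigma>, \<tau>]"
  define B where "B = insert u (insert w B')"
  have lfs': "length fs' = 2*m+3" unfolding fs'_def top_def bot_def using len by simp
  have bKc: "bK x = 0 \<or> bK x = 4*M \<or> bK x = 8*M \<or> bK x = 12*M" for x unfolding bK_def by auto
  have ac: "(a = 1 \<and> c = 2) \<or> (a = 2 \<and> c = 1)" unfolding a_def c_def by auto
  have eu: "ext s f u = s + a" and ew: "ext s f w = s + c" for s f
    unfolding ext_def using uw by auto
  have ez: "z \<in> B' \<Longrightarrow> ext s f z = f z" for s f z unfolding ext_def using uB wB by auto
  have ext_inj: "inj_on (ext s f) B" if f: "f \<in> set fs" and s: "s = M \<or> s = -M-3" for s f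
  proof (rule inj_onI)
    fix x y assume xy: "x \<in> B" "y \<in> B" "ext s f x = ext s f y"
    have nz: "z \<in> B' \<Longrightarrow> f z \<noteq> s + a \<and> f z \<noteq> s + c" for z
      using Mb[OF f, of z] ac s by auto
    have "a \<noteq> c" using ac by auto
    show "x = y"
    proof (cases "x \<in> B' \<and> y \<in> B'")
      case True thus ?thesis using xy injs[OF f] ez by (auto simp: inj_on_def)
    next
      case False
      have "x = u \<or> x = w \<or> x \<in> B'" "y = u \<or> y = w \<or> y \<in> B'" using xy unfolding B_def by auto
      thus ?thesis using False xy(3) eu ew ez nz \<open>a \<noteq> c\<close> by (elim disjE) (simp_all, metis+)
    qed
  qed
  have sB: "z \<in> B' \<Longrightarrow> \<sigma> z = bK z + g z" and tB: "z \<in> B' \<Longrightarrow> \<tau> z = -(bK z + g z)" for z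
    unfolding \<sigma>_def \<tau>_def using uB wB by auto
  have su: "\<sigma> u = 20*M" and sw: "\<sigma> w = 10*M" and tu: "\<tau> u = -6*M" and tw: "\<tau> w = -2*M"
    unfolding \<sigma>_def \<tau>_def using uw by auto
  have Bsame: "x \<in> B' \<Longrightarrow> y \<in> B' \<Longrightarrow> bK x + g x = bK y + g y \<Longrightarrow> x = y" for x y
  proof -
    assume xy: "x \<in> B'" "y \<in> B'" "bK x + g x = bK y + g y"
    have "\<bar>g x\<bar> < M" "\<bar>g y\<bar> < M" using gb xy by auto
    hence "g x = g y" using xy(3) bKc[of x] bKc[of y] by auto
    thus ?thesis using ginj xy by (auto simp: inj_on_def)
  qed
  have nzs: "z \<in> B' \<Longrightarrow> bK z + g z \<noteq> 20*M \<and> bK z + g z \<noteq> 10*M \<and> bK z + g z \<noteq> 6*M \<and> bK z + g z \<noteq> 2*M" for z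
    using gb[of z] bKc[of z] by auto
  have sig_inj: "inj_on \<sigma> B"
  proof (rule inj_onI)
    fix x y assume xy: "x \<in> B" "y \<in> B" "\<sigma> x = \<sigma> y"
    have "x = u \<or> x = w \<or> x \<in> B'" "y = u \<or> y = w \<or> y \<in> B'" using xy unfolding B_def by auto
    thus "x = y" using xy(3) sB su sw nzs Bsame M1 by (elim disjE) (simp_all, metis+)
  qed
  have tau_inj: "inj_on \<tau> B"
  proof (rule inj_onI)
    fix x y assume xy: "x \<in> B" "y \<in> B" "\<tau> x = \<tau> y"
    have "x = u \<or> x = w \<or> x \<in> B'" "y = u \<or> y = w \<or> y \<in> B'" using xy unfolding B_def by auto
    have tnz: "z \<in> B' \<Longrightarrow> \<tau> z \<noteq> \<tau> u \<and> \<tau> z \<noteq> \<tau> w" for z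
      using nzs[of z] tB[of z] tu tw by auto
    have tuw: "\<tau> u \<noteq> \<tau> w" using tu tw M1 by simp
    have tBB: "x \<in> B' \<Longrightarrow> y \<in> B' \<Longrightarrow> \<tau> x = \<tau> y \<Longrightarrow> x = y" for x y
      using Bsame tB by fastforce
    show "x = y"
    proof (cases "x \<in> B'")
      case True
      then show ?thesis using \<open>y = u \<or> y = w \<or> y \<in> B'\<close> xy(3) tnz[of x] tBB[of x y] by auto
    next
      case False
      then show ?thesis using \<open>x = u \<or> x = w \<or> x \<in> B'\<close> \<open>y = u \<or> y = w \<or> y \<in> B'\<close> xy(3) tnz[of y] tuw by auto
    qed
  qed
  have ltop: "length (take m fs) = m" and lbot: "length (drop m fs) = m + 1" using len by auto
  have fT: "f \<in> set (take m fs) \<Longrightarrow> f \<in> set fs" and fD: "f \<in> set (drop m fs) \<Longrightarrow> f \<in> set fs" for f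
    using set_take_subset set_drop_subset by fastforce+
  have pair: "cnt [\<sigma>,\<tau>] x y = (if \<sigma> y < \<sigma> x then 1 else 0) + (if \<tau> y < \<tau> x then 1 else 0)" for x y
    by (simp add: cnt_def)
  have c_BB: "cnt fs' x y = cnt fs x y + 1" if xy: "x \<in> B'" "y \<in> B'" "x \<noteq> y" for x y
  proof -
    have "cnt top x y = cnt (take m fs) x y" unfolding top_def using xy ez by (intro cnt_map_same) auto
    moreover have "cnt bot x y = cnt (drop m fs) x y" unfolding bot_def using xy ez by (intro cnt_map_same) auto
    moreover have "cnt (take m fs) x y + cnt (drop m fs) x y = cnt fs x y"
      by (metis append_take_drop_id cnt_append)
    moreover have "\<sigma> x \<noteq> \<sigma> y" using sig_inj xy unfolding B_def inj_on_def by auto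
    moreover have "cnt [\<sigma>,\<tau>] x y = 1" using \<open>\<sigma> x \<noteq> \<sigma> y\<close> unfolding pair using xy sB tB by auto
    ultimately show ?thesis unfolding fs'_def by simp
  qed
  have c_uz: "cnt fs' u z = m + 1 + (if (u,z)\<in>T then 1 else 0)"
   and c_zu: "cnt fs' z u = m + 1 + (if (u,z)\<in>T then 0 else 1)" if z: "z \<in> B'" for z
  proof -
    have "cnt top u z = m" unfolding top_def using ltop
      by (subst cnt_map_all) (use z ez eu Mb fT ac in \<open>auto, fastforce+\<close>)
    moreover have "cnt top z u = 0" unfolding top_def
      by (subst cnt_map_none) (use z ez eu Mb fT ac in \<open>auto, fastforce+\<close>)
    moreover have "cnt bot u z = 0" unfolding bot_def
      by (subst cnt_map_none) (use z ez eu Mb fD ac in \<open>auto, fastforce+\<close>)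
    moreover have "cnt bot z u = m+1" unfolding bot_def using lbot
      by (subst cnt_map_all) (use z ez eu Mb fD ac in \<open>auto, fastforce+\<close>)
    moreover have "cnt [\<sigma>,\<tau>] u z = 1 + (if (u,z)\<in>T then 1 else 0)"
      unfolding pair using z sB tB su tu gb[OF z] M1 unfolding bK_def by auto
    moreover have "cnt [\<sigma>,\<tau>] z u = (if (u,z)\<in>T then 0 else 1)"
      unfolding pair using z sB tB su tu gb[OF z] M1 unfolding bK_def by auto
    ultimately show "cnt fs' u z = m + 1 + (if (u,z)\<in>T then 1 else 0)"
      "cnt fs' z u = m + 1 + (if (u,z)\<in>T then 0 else 1)" unfolding fs'_def by auto
  qed
  have c_wz: "cnt fs' w z = m + (if (w,z)\<in>T then 2 else 1)"
   and c_zw: "cnt fs' z w = m + 1 + (if (w,z)\<in>T then 0 else 1)" if z: "z \<in> B'" for z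
  proof -
    have "cnt top w z = m" unfolding top_def using ltop
      by (subst cnt_map_all) (use z ez ew Mb fT ac in \<open>auto, fastforce+\<close>)
    moreover have "cnt top z w = 0" unfolding top_def
      by (subst cnt_map_none) (use z ez ew Mb fT ac in \<open>auto, fastforce+\<close>)
    moreover have "cnt bot w z = 0" unfolding bot_def
      by (subst cnt_map_none) (use z ez ew Mb fD ac in \<open>auto, fastforce+\<close>)
    moreover have "cnt bot z w = m+1" unfolding bot_def using lbot
      by (subst cnt_map_all) (use z ez ew Mb fD ac in \<open>auto, fastforce+\<close>)
    moreover have "cnt [\<sigma>,\<tau>] w z = (if (w,z)\<in>T then 2 else 1)"
      unfolding pair using z sB tB sw tw gb[OF z] M1 unfolding bK_def by auto
    moreover have "cnt [\<sigma>,\<tau>] z w = (if (w,z)\<in>T then 0 else 1)"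
      unfolding pair using z sB tB sw tw gb[OF z] M1 unfolding bK_def by auto
    ultimately show "cnt fs' w z = m + (if (w,z)\<in>T then 2 else 1)"
      "cnt fs' z w = m + 1 + (if (w,z)\<in>T then 0 else 1)" unfolding fs'_def by auto
  qed
  have c_uw: "cnt fs' u w = (if (u,w)\<in>T then 2*m+1 else 0) + 1"
   and c_wu: "cnt fs' w u = (if (u,w)\<in>T then 0 else 2*m+1) + 1"
  proof -
    have "cnt top u w = (if (u,w)\<in>T then m else 0)" unfolding top_def using ltop
      by (cases "(u,w)\<in>T") (simp_all add: cnt_def comp_def eu ew a_def c_def)
    moreover have "cnt top w u = (if (u,w)\<in>T then 0 else m)" unfolding top_def using ltop
      by (cases "(u,w)\<in>T") (simp_all add: cnt_def comp_def eu ew a_def c_def)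
    moreover have "cnt bot u w = (if (u,w)\<in>T then m+1 else 0)" unfolding bot_def using lbot
      by (cases "(u,w)\<in>T") (simp_all add: cnt_def comp_def eu ew a_def c_def)
    moreover have "cnt bot w u = (if (u,w)\<in>T then 0 else m+1)" unfolding bot_def using lbot
      by (cases "(u,w)\<in>T") (simp_all add: cnt_def comp_def eu ew a_def c_def)
    moreover have "cnt [\<sigma>,\<tau>] u w = 1" "cnt [\<sigma>,\<tau>] w u = 1"
      unfolding pair using su sw tu tw M1 by auto
    ultimately show "cnt fs' u w = (if (u,w)\<in>T then 2*m+1 else 0) + 1"
      "cnt fs' w u = (if (u,w)\<in>T then 0 else 2*m+1) + 1" unfolding fs'_def by auto
  qed
  have tr: "x \<in> A \<Longrightarrow> y \<in> A \<Longrightarrow> x \<noteq> y \<Longrightarrow> (x,y) \<in> T \<longleftrightarrow> (y,x) \<notin> T" for x y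
    using tour unfolding tournament_def by blast
  have uA: "u \<in> A" and wA: "w \<in> A" and BA': "B' \<subseteq> A" using BA by auto
  have oldc: "x \<in> B' \<Longrightarrow> y \<in> B' \<Longrightarrow> x \<noteq> y \<Longrightarrow> ((x,y)\<in>T \<longleftrightarrow> cnt fs y x < cnt fs x y)" for x y
    using gd unfolding good_def by blast
  have cnts: "(x,y)\<in>T \<longleftrightarrow> cnt fs' y x < cnt fs' x y" if xy: "x \<in> B" "y \<in> B" "x \<noteq> y" for x y
  proof -
    have xc: "x = u \<or> x = w \<or> x \<in> B'" and yc: "y = u \<or> y = w \<or> y \<in> B'" using xy unfolding B_def by auto
    have uw': "(w,u) \<in> T \<longleftrightarrow> (u,w) \<notin> T" using tr[OF wA uA] uw by blast
    have zu: "z \<in> B' \<Longrightarrow> (z,u) \<in> T \<longleftrightarrow> (u,z) \<notin> T" for z using tr[OF _ uA, of z] BA' uB by blast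
    have zw: "z \<in> B' \<Longrightarrow> (z,w) \<in> T \<longleftrightarrow> (w,z) \<notin> T" for z using tr[OF _ wA, of z] BA' wB by blast
    show ?thesis
    proof (cases "x = u")
      case xu: True
      show ?thesis
      proof (cases "y = w")
        case True thus ?thesis using xu c_uw c_wu by simp
      next
        case False
        hence "y \<in> B'" using yc xy(3) xu by auto
        thus ?thesis using xu c_uz[of y] c_zu[of y] by simp
      qed
    next
      case xnu: False
      show ?thesis
      proof (cases "x = w")
        case xw: True
        show ?thesis
        proof (cases "y = u")
          case True thus ?thesis using xw c_uw c_wu uw' by simp
        next
          case False
          hence "y \<in> B'" using yc xy(3) xw by auto
          thus ?thesis using xw c_wz[of y] c_zw[of y] by simp
        qed
      next
        case False
        hence xB: "x \<in> B'" using xc xnu by auto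
        show ?thesis
        proof (cases "y = u")
          case True thus ?thesis using xB c_uz[of x] c_zu[of x] zu[of x] by simp
        next
          case ynu: False
          show ?thesis
          proof (cases "y = w")
            case True thus ?thesis using xB c_wz[of x] c_zw[of x] zw[of x] by simp
          next
            case False
            hence "y \<in> B'" using yc ynu by auto
            thus ?thesis using xB c_BB oldc xy(3) by simp
          qed
        qed
      qed
    qed
  qed
  have injall: "\<forall>f\<in>set fs'. inj_on f B"
    unfolding fs'_def top_def bot_def using ext_inj fT fD sig_inj tau_inj by auto
  show ?thesis using lfs' cnts injall unfolding good_def B_def by blast
qed


definition rep :: "'a rel \<Rightarrow> ('a \<Rightarrow> int) \<Rightarrow> 'a set \<Rightarrow> bool" where
  "rep T f S \<longleftrightarrow> inj_on f S \<and> (\<forall>x\<in>S. \<forall>y\<in>S. x\<noteq>y \<longrightarrow> ((x,y)\<in>T \<longleftrightarrow> f y < f x))"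

lemma trans_sub:
  assumes "\<forall>x\<in>A. \<forall>y\<in>A. x\<noteq>y \<longrightarrow> ((x,y)\<in>T \<longleftrightarrow> (y,x)\<notin>T)" "finite A" "2^k \<le> card A"
  shows "\<exists>S\<subseteq>A. card S = k+1 \<and> (\<exists>f. rep T f S)"
  using assms
proof (induction k arbitrary: A)
  case 0
  then obtain v where "v \<in> A" by fastforce
  thus ?case by (intro exI[of _ "{v}"]) (auto simp: rep_def)
next
  case (Suc k)
  have tr: "\<forall>x\<in>A. \<forall>y\<in>A. x\<noteq>y \<longrightarrow> ((x,y)\<in>T \<longleftrightarrow> (y,x)\<notin>T)" by fact
  have "(0::nat) < 2^Suc k" by simp
  hence "card A \<noteq> 0" using Suc.prems(3) by linarith
  then obtain v where v: "v \<in> A" by fastforce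
  define Ov where "Ov = {x\<in>A - {v}. (v,x)\<in>T}"
  define I where "I = {x\<in>A - {v}. (v,x)\<notin>T}"
  have fO: "finite Ov" "finite I" using Suc.prems(2) unfolding Ov_def I_def by auto
  have "Ov \<union> I = A - {v}" "Ov \<inter> I = {}" unfolding Ov_def I_def by auto
  hence "card Ov + card I = card (A - {v})" using fO by (metis card_Un_disjoint)
  hence "card Ov + card I = card A - 1" using v Suc.prems(2) by simp
  hence "card Ov \<ge> 2^k \<or> card I \<ge> 2^k" using Suc.prems(3) by auto
  thus ?case
  proof
    assume cO: "card Ov \<ge> 2^k"
    have tO: "\<forall>x\<in>Ov. \<forall>y\<in>Ov. x\<noteq>y \<longrightarrow> ((x,y)\<in>T \<longleftrightarrow> (y,x)\<notin>T)" using tr unfolding Ov_def by blast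
    have "\<exists>S\<subseteq>Ov. card S = k+1 \<and> (\<exists>f. rep T f S)" by (rule Suc.IH[OF tO fO(1) cO])
    then obtain S f where S: "S \<subseteq> Ov" "card S = k+1" "rep T f S" by blast
    have finS: "finite S" using S(1) fO(1) finite_subset by blast
    obtain M where M: "M \<ge> 1" "\<forall>z\<in>S. \<bar>f z\<bar> < M" using bound_ex[OF finS, of f] by blast
    have vS: "v \<notin> S" using S(1) unfolding Ov_def by auto
    have fv: "(f(v := M)) v = M" and fz: "z \<in> S \<Longrightarrow> (f(v := M)) z = f z" for z using vS by auto
    have SA: "S \<subseteq> A" and Sv: "z \<in> S \<Longrightarrow> (v,z) \<in> T" for z using S(1) unfolding Ov_def by auto
    have "rep T (f(v := M)) (insert v S)" unfolding rep_def
    proof (intro conjI ballI impI)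
      show "inj_on (f(v := M)) (insert v S)"
      proof (rule inj_onI)
        fix x y assume xy: "x \<in> insert v S" "y \<in> insert v S" "(f(v := M)) x = (f(v := M)) y"
        have nz: "z \<in> S \<Longrightarrow> f z \<noteq> M" for z using M(2) by fastforce
        show "x = y"
        proof (cases "x = v \<or> y = v")
          case True
          show ?thesis
          proof (rule ccontr)
            assume ne: "x \<noteq> y"
            from True show False
            proof
              assume xv: "x = v"
              hence "y \<in> S" using xy ne by auto
              moreover have "f y = M" using xy(3) xv ne by simp
              ultimately show False using nz by blast
            next
              assume yv: "y = v"
              hence "x \<in> S" using xy ne by auto
              moreover have "f x = M" using xy(3) yv ne by simp
              ultimately show False using nz by blast
            qed
          qed
        next
          case False thus ?thesis using xy fz S(3) unfolding rep_def inj_on_def by auto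
        qed
      qed
    next
      fix x y assume xy: "x \<in> insert v S" "y \<in> insert v S" "x \<noteq> y"
      show "(x, y) \<in> T \<longleftrightarrow> (f(v := M)) y < (f(v := M)) x"
      proof (cases "x = v")
        case True
        hence yS: "y \<in> S" using xy by auto
        show ?thesis using True fv fz[OF yS] Sv[OF yS] M(2) yS by auto
      next
        case False
        hence xS: "x \<in> S" using xy by auto
        show ?thesis
        proof (cases "y = v")
          case True
          have "(x,v)\<in>T \<longleftrightarrow> (v,x)\<notin>T" using tr v SA xS vS by (metis subsetD)
          thus ?thesis using True fv fz[OF xS] Sv[OF xS] M(2) xS by auto
        next
          case False
          hence "y \<in> S" using xy by auto
          thus ?thesis using xS xy(3) S(3) fz unfolding rep_def by auto
        qed
      qed
    qed
    moreover have "card (insert v S) = Suc k + 1" using vS S(2) finS by simp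
    moreover have "insert v S \<subseteq> A" using S(1) v unfolding Ov_def by auto
    ultimately show ?thesis by blast
  next
    assume cO: "card I \<ge> 2^k"
    have tO: "\<forall>x\<in>I. \<forall>y\<in>I. x\<noteq>y \<longrightarrow> ((x,y)\<in>T \<longleftrightarrow> (y,x)\<notin>T)" using tr unfolding I_def by blast
    have "\<exists>S\<subseteq>I. card S = k+1 \<and> (\<exists>f. rep T f S)" by (rule Suc.IH[OF tO fO(2) cO])
    then obtain S f where S: "S \<subseteq> I" "card S = k+1" "rep T f S" by blast
    have finS: "finite S" using S(1) fO(2) finite_subset by blast
    obtain M where M: "M \<ge> 1" "\<forall>z\<in>S. \<bar>f z\<bar> < M" using bound_ex[OF finS, of f] by blast
    have vS: "v \<notin> S" using S(1) unfolding I_def by auto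
    have fv: "(f(v := -M)) v = -M" and fz: "z \<in> S \<Longrightarrow> (f(v := -M)) z = f z" for z using vS by auto
    have SA: "S \<subseteq> A" and Sv: "z \<in> S \<Longrightarrow> \<not> (v,z) \<in> T" for z using S(1) unfolding I_def by auto
    have "rep T (f(v := -M)) (insert v S)" unfolding rep_def
    proof (intro conjI ballI impI)
      show "inj_on (f(v := -M)) (insert v S)"
      proof (rule inj_onI)
        fix x y assume xy: "x \<in> insert v S" "y \<in> insert v S" "(f(v := -M)) x = (f(v := -M)) y"
        have nz: "z \<in> S \<Longrightarrow> f z \<noteq> -M" for z using M(2) by fastforce
        show "x = y"
        proof (cases "x = v \<or> y = v")
          case True
          show ?thesis
          proof (rule ccontr)
            assume ne: "x \<noteq> y"
            from True show False
            proof
              assume xv: "x = v"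
              hence "y \<in> S" using xy ne by auto
              moreover have "f y = -M" using xy(3) xv ne by simp
              ultimately show False using nz by blast
            next
              assume yv: "y = v"
              hence "x \<in> S" using xy ne by auto
              moreover have "f x = -M" using xy(3) yv ne by simp
              ultimately show False using nz by blast
            qed
          qed
        next
          case False thus ?thesis using xy fz S(3) unfolding rep_def inj_on_def by auto
        qed
      qed
    next
      fix x y assume xy: "x \<in> insert v S" "y \<in> insert v S" "x \<noteq> y"
      show "(x, y) \<in> T \<longleftrightarrow> (f(v := -M)) y < (f(v := -M)) x"
      proof (cases "x = v")
        case True
        hence yS: "y \<in> S" using xy by auto
        show ?thesis using True fv fz[OF yS] Sv[OF yS] M(2) yS by auto
      next
        case False
        hence xS: "x \<in> S" using xy by auto
        show ?thesis
        proof (cases "y = v")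
          case True
          have "(x,v)\<in>T \<longleftrightarrow> (v,x)\<notin>T" using tr v SA xS vS by (metis subsetD)
          thus ?thesis using True fv fz[OF xS] Sv[OF xS] M(2) xS by auto
        next
          case False
          hence "y \<in> S" using xy by auto
          thus ?thesis using xS xy(3) S(3) fz unfolding rep_def by auto
        qed
      qed
    qed
    moreover have "card (insert v S) = Suc k + 1" using vS S(2) finS by simp
    moreover have "insert v S \<subseteq> A" using S(1) v unfolding I_def by auto
    ultimately show ?thesis by blast
  qed
qed


lemma good_base: "rep T f S \<Longrightarrow> good S T [f]"
proof -
  assume r: "rep T f S"
  have "x \<in> S \<Longrightarrow> y \<in> S \<Longrightarrow> x \<noteq> y \<Longrightarrow> f x \<noteq> f y" for x y using r unfolding rep_def inj_on_def by blast
  hence "x \<in> S \<Longrightarrow> y \<in> S \<Longrightarrow> x \<noteq> y \<Longrightarrow> ((x,y) \<in> T \<longleftrightarrow> cnt [f] y x < cnt [f] x y)" for x y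
    using r unfolding rep_def cnt_def by (cases "f y < f x") auto
  thus ?thesis using r unfolding rep_def good_def by auto
qed

lemma pairs:
  assumes tour: "tournament A T" and fin: "finite A" and SB: "S \<subseteq> B" and BA: "B \<subseteq> A"
    and rp: "rep T f S"
  shows "card (B - S) = 2*p \<Longrightarrow> \<exists>fs. length fs = 2*p+1 \<and> good B T fs"
  using SB BA
proof (induction p arbitrary: B)
  case 0
  have "finite B" using 0 fin finite_subset by blast
  hence "B = S" using 0 by auto
  thus ?case using good_base[OF rp] by (intro exI[of _ "[f]"]) auto
next
  case (Suc p)
  have finB: "finite B" using Suc.prems fin finite_subset by blast
  have "card (B - S) > 0" using Suc.prems(1) by simp
  then obtain u where u: "u \<in> B - S" by (metis all_not_in_conv card.empty less_irrefl)
  have c1: "card (B - S - {u}) = 2*p + 1" using Suc.prems(1) u finB by simp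
  hence "card (B - S - {u}) > 0" by simp
  then obtain w where w: "w \<in> B - S - {u}" by (metis all_not_in_conv card.empty less_irrefl)
  define B' where "B' = B - {u, w}"
  have c2: "card (B' - S) = 2*p"
  proof -
    have "B' - S = B - S - {u} - {w}" unfolding B'_def by auto
    thus ?thesis using c1 w finB by simp
  qed
  have SB': "S \<subseteq> B'" using Suc.prems(2) u w unfolding B'_def by auto
  have B'A: "B' \<subseteq> A" using Suc.prems(3) unfolding B'_def by auto
  obtain fs where fs: "length fs = 2*p+1" "good B' T fs" using Suc.IH[OF c2 SB' B'A] by blast
  have BB: "insert u (insert w B') = B" using u w unfolding B'_def by auto
  have "\<exists>fs'. length fs' = 2*p+3 \<and> good (insert u (insert w B')) T fs'"
    by (rule ext2[OF tour _ _ _ _ _ fs]) (use BB Suc.prems(3) finB u w in \<open>auto simp: B'_def\<close>)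
  then obtain fs' where "length fs' = 2*p+3" "good B T fs'" using BB by auto
  moreover have "2*p+3 = 2 * Suc p + 1" by simp
  ultimately show ?case by metis
qed

lemma n_prefer_cnt:
  assumes "\<forall>f\<in>set fs. inj_on f A" "x \<in> A" "y \<in> A" "x \<noteq> y"
  shows "n_prefer (mset (map (rel_of A) fs)) x y = cnt fs x y"
  using assms
proof (induction fs)
  case Nil thus ?case by (simp add: n_prefer_def cnt_def)
next
  case (Cons f fs)
  have "f x \<noteq> f y" using Cons.prems unfolding inj_on_def by auto
  hence "((x, y) \<in> rel_of A f \<and> x \<noteq> y) \<longleftrightarrow> f y < f x" using Cons.prems unfolding rel_of_def by auto
  thus ?case using Cons by (simp add: n_prefer_def cnt_def)
qed

lemma voter_rel_of: "inj_on f A \<Longrightarrow> voter A (rel_of A f)"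
  unfolding voter_def linear_order_on_def partial_order_on_def preorder_on_def refl_on_def
    trans_def antisym_def total_on_def rel_of_def inj_on_def
  by auto

lemma vT_le:
  assumes "good A T fs" "fs \<noteq> []"
  shows "vT A T \<le> length fs"
proof -
  define U where "U = mset (map (rel_of A) fs)"
  have inj: "\<forall>f\<in>set fs. inj_on f A" using assms(1) unfolding good_def by blast
  have "U \<noteq> {#}" unfolding U_def using assms(2) by simp
  moreover have "\<forall>r\<in>#U. voter A r" unfolding U_def using inj voter_rel_of by auto
  moreover have "\<forall>x\<in>A. \<forall>y\<in>A. x \<noteq> y \<longrightarrow> ((x, y) \<in> T \<longleftrightarrow> n_prefer U x y > n_prefer U y x)"
    unfolding U_def using assms(1) n_prefer_cnt[OF inj] unfolding good_def by auto
  ultimately have "generates A U T" unfolding generates_def by blast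
  moreover have "size U = length fs" unfolding U_def by simp
  ultimately show ?thesis unfolding vT_def by (metis (mono_tags, lifting) Least_le)
qed


lemma log_facts:
  fixes n k :: nat
  assumes "n \<ge> 2" and "int k = \<lfloor>log 2 (real n)\<rfloor>"
  shows "2^k \<le> n" "k \<ge> 1"
proof -
  have "real k \<le> log 2 (real n)" using assms(2) by (metis of_int_floor_le of_int_of_nat_eq)
  hence "2 powr real k \<le> real n" using assms(1) by (subst (asm) le_log_iff) auto
  hence "real (2^k) \<le> real n" by (simp add: powr_realpow)
  thus "2^k \<le> n" by linarith
  have "log 2 (real n) \<ge> log 2 2" using assms(1) by simp
  hence "log 2 (real n) \<ge> 1" by simp
  hence "\<lfloor>log 2 (real n)\<rfloor> \<ge> 1" by simp
  hence "int k \<ge> 1" using assms(2) by linarith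
  thus "k \<ge> 1" by linarith
qed

lemma gen_bound:
  assumes tour: "tournament A T" and fin: "finite A" and c: "2^j \<le> card A"
    and ev: "even (card A - (j+1))"
  shows "vT A T \<le> card A - j"
proof -
  have tr: "\<forall>x\<in>A. \<forall>y\<in>A. x\<noteq>y \<longrightarrow> ((x,y)\<in>T \<longleftrightarrow> (y,x)\<notin>T)" using tour unfolding tournament_def by blast
  obtain S f where S: "S \<subseteq> A" "card S = j+1" "rep T f S" using trans_sub[OF tr fin c] by blast
  have jl: "j < 2^j" by (rule less_exp)
  define p where "p = (card A - (j+1)) div 2"
  have cAS: "card (A - S) = 2*p" using S fin ev unfolding p_def by (simp add: card_Diff_subset finite_subset)
  obtain fs where fs: "length fs = 2*p+1" "good A T fs"
    using pairs[OF tour fin S(1) order_refl S(3) cAS] by blast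
  have "j < card A" using jl c by linarith
  moreover have "2*p = card A - (j+1)" using ev unfolding p_def by simp
  ultimately have "length fs = card A - j" using fs(1) by linarith
  moreover have "vT A T \<le> length fs" by (rule vT_le[OF fs(2)]) (use fs(1) in auto)
  ultimately show ?thesis by simp
qed

lemma vn_le:
  assumes "\<And>T. tournament {0..<n} T \<Longrightarrow> vT {0..<n} T \<le> b"
  shows "vn n \<le> b"
proof -
  define A where "A = {0..<n}"
  have fin: "finite {T. tournament A T}"
    by (rule finite_subset[of _ "Pow (A \<times> A)"]) (auto simp: tournament_def A_def)
  have ne: "tournament A {(x,y). x\<in>A \<and> y\<in>A \<and> y<x}" unfolding tournament_def by auto
  have eq: "{vT A T | T. tournament A T} = (\<lambda>T. vT A T) ` {T. tournament A T}" by auto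
  show ?thesis unfolding vn_def A_def[symmetric] eq
    using fin ne assms unfolding A_def by (intro Max.boundedI) auto
qed

theorem mainTheorem3:
  fixes n k :: nat
  assumes "n \<ge> 2"
    and "int k = \<lfloor>log 2 (real n)\<rfloor>"
  shows "(odd (n + k) \<longrightarrow> vn n \<le> n - k) \<and> (even (n + k) \<longrightarrow> vn n \<le> n - k + 1)"
proof -
  have pk: "2^k \<le> n" and k1: "k \<ge> 1" using log_facts[OF assms] by auto
  have kn: "k < n" using less_exp[of k] pk by linarith
  show ?thesis
  proof (intro conjI impI)
    assume o: "odd (n + k)"
    show "vn n \<le> n - k"
    proof (rule vn_le)
      fix T assume "tournament {0..<n} T"
      moreover have "even (card {0..<n} - (k+1))" using o kn by (simp add: even_diff_nat)
      ultimately show "vT {0..<n} T \<le> n - k" using gen_bound[of "{0..<n}" T k] pk by simp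
    qed
  next
    assume e: "even (n + k)"
    show "vn n \<le> n - k + 1"
    proof (rule vn_le)
      fix T assume "tournament {0..<n} T"
      moreover have "even (card {0..<n} - (k - 1 + 1))" using e kn k1 by (simp add: even_diff_nat)
      moreover have "2^(k-1) \<le> card {0..<n}" using pk
        by (metis card_atLeastLessThan diff_le_self diff_zero dual_order.trans one_le_numeral power_increasing)
      ultimately have "vT {0..<n} T \<le> card {0..<n} - (k - 1)" using gen_bound[of "{0..<n}" T "k-1"] by simp
      thus "vT {0..<n} T \<le> n - k + 1" using k1 kn by simp
    qed
  qed
qed

end
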